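(* Let $J\subseteq E$ and let $F\subseteq E\setminus J$ be obtained by picking, for every $b\in B$, a set of $r^J_b$ edges of $E\setminus J$ incident to $b$ of minimal cost at $b$ (i.e. the $r^J_b$ edges $e$ with smallest $c_e^b$). Then $J\cup F$ is an $r$-edge-cover, and: (i) $\ell_F(B)\le\mathsf{opt}$; (ii) $\ell_F(A)\le\theta\cdot\Phi(J)$.
   Context: Bipartite Activation Edge-Multicover: the input is a bipartite multigraph $G=(A\cup B,E)$, where each edge is written $e=ab$ with $a\in A$, $b\in B$ and has non-negative activation costs $c_e^a,c_e^b$, and non-negative integer requirements $r=\{r_b: b\in B\}$. For $J\subseteq E$ and a node $v$, $\delta_J(v)$ is the set of edges of $J$ incident to $v$, $\deg_J(v)=|\delta_J(v)|$, $\ell_J(v)=\max\{c_e^v: e\in\delta_J(v)\}$ (max over the empty set is $0$), and $\ell_J(U)=\sum_{v\in U}\ell_J(v)$. $J$ is an $r$-edge-cover if $\deg_J(b)\ge r_b$ for all $b\in B$. $\mathsf{opt}$ is the minimum of $\ell_J(A\cup B)$ over $r$-edge-covers $J$ (the instance is assumed feasible). The slope is $\theta=\max_{e=ab\in E}\frac{\max\{c_e^a,c_e^b\}}{\min\{c_e^a,c_e^b\}}$. For $b\in B$, $w_b$ is the $r_b$-th smallest of the values $c_e^b$ over edges $e\in E$ incident to $b$ (with multiplicity), $w_b=0$ if $r_b=0$. Residual requirement $r^J_b=\max\{r_b-\deg_J(b),0\}$, potential $\Phi(J)=\sum_{b\in B}w_b r^J_b$. *)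

theory Defs
  imports Complex_Main "HOL-Library.Multiset"
begin

(* Bipartite multigraph: vertices of type 'v, parts A and B (disjoint),
   edges of type 'e in the finite set E; edge e has A-endpoint ea e and
   B-endpoint eb e.  The activation cost of e at its endpoint v is c e v. *)

definition delta :: "('e \<Rightarrow> 'v) \<Rightarrow> ('e \<Rightarrow> 'v) \<Rightarrow> 'e set \<Rightarrow> 'v \<Rightarrow> 'e set" where
  "delta ea eb J v = {e \<in> J. ea e = v \<or> eb e = v}"

definition deg :: "('e \<Rightarrow> 'v) \<Rightarrow> ('e \<Rightarrow> 'v) \<Rightarrow> 'e set \<Rightarrow> 'v \<Rightarrow> nat" where
  "deg ea eb J v = card (delta ea eb J v)"

definition load :: "('e \<Rightarrow> 'v) \<Rightarrow> ('e \<Rightarrow> 'v) \<Rightarrow> ('e \<Rightarrow> 'v \<Rightarrow> real) \<Rightarrow> 'e set \<Rightarrow> 'v \<Rightarrow> real" where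
  "load ea eb c J v = (if delta ea eb J v = {} then 0 else Max ((\<lambda>e. c e v) ` delta ea eb J v))"

definition load_set :: "('e \<Rightarrow> 'v) \<Rightarrow> ('e \<Rightarrow> 'v) \<Rightarrow> ('e \<Rightarrow> 'v \<Rightarrow> real) \<Rightarrow> 'e set \<Rightarrow> 'v set \<Rightarrow> real" where
  "load_set ea eb c J U = (\<Sum>v\<in>U. load ea eb c J v)"

definition is_cover :: "('e \<Rightarrow> 'v) \<Rightarrow> ('e \<Rightarrow> 'v) \<Rightarrow> 'v set \<Rightarrow> ('v \<Rightarrow> nat) \<Rightarrow> 'e set \<Rightarrow> bool" where
  "is_cover ea eb B r J = (\<forall>b\<in>B. deg ea eb J b \<ge> r b)"

definition opt :: "('e \<Rightarrow> 'v) \<Rightarrow> ('e \<Rightarrow> 'v) \<Rightarrow> ('e \<Rightarrow> 'v \<Rightarrow> real) \<Rightarrow> 'v set \<Rightarrow> 'v set \<Rightarrow> 'e set \<Rightarrow> ('v \<Rightarrow> nat) \<Rightarrow> real" where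
  "opt ea eb c A B E r = Min {load_set ea eb c J (A \<union> B) | J. J \<subseteq> E \<and> is_cover ea eb B r J}"

definition slope :: "('e \<Rightarrow> 'v) \<Rightarrow> ('e \<Rightarrow> 'v) \<Rightarrow> ('e \<Rightarrow> 'v \<Rightarrow> real) \<Rightarrow> 'e set \<Rightarrow> real" where
  "slope ea eb c E = Max ((\<lambda>e. max (c e (ea e)) (c e (eb e)) / min (c e (ea e)) (c e (eb e))) ` E)"

definition wreq :: "('e \<Rightarrow> 'v) \<Rightarrow> ('e \<Rightarrow> 'v) \<Rightarrow> ('e \<Rightarrow> 'v \<Rightarrow> real) \<Rightarrow> 'e set \<Rightarrow> ('v \<Rightarrow> nat) \<Rightarrow> 'v \<Rightarrow> real" where
  "wreq ea eb c E r b = (if r b = 0 then 0 else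
     sorted_list_of_multiset (image_mset (\<lambda>e. c e b) (mset_set (delta ea eb E b))) ! (r b - 1))"

(* residual requirement max(r_b - deg_J(b), 0), via truncated nat subtraction *)
definition resid :: "('e \<Rightarrow> 'v) \<Rightarrow> ('e \<Rightarrow> 'v) \<Rightarrow> ('v \<Rightarrow> nat) \<Rightarrow> 'e set \<Rightarrow> 'v \<Rightarrow> nat" where
  "resid ea eb r J b = r b - deg ea eb J b"

definition potential :: "('e \<Rightarrow> 'v) \<Rightarrow> ('e \<Rightarrow> 'v) \<Rightarrow> ('e \<Rightarrow> 'v \<Rightarrow> real) \<Rightarrow> 'e set \<Rightarrow> 'v set \<Rightarrow> ('v \<Rightarrow> nat) \<Rightarrow> 'e set \<Rightarrow> real" where
  "potential ea eb c E B r J = (\<Sum>b\<in>B. wreq ea eb c E r b * real (resid ea eb r J b))"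

end

theory Submission
  imports Defs
begin

lemma os_le:
  fixes xs :: "real list"
  assumes "sorted xs" "1 \<le> r" "r \<le> length xs"
  shows "r \<le> length (filter (\<lambda>v. v \<le> xs!(r-1)) xs)"
proof -
  have all: "\<forall>v\<in>set (take r xs). v \<le> xs!(r-1)"
  proof
    fix v assume "v \<in> set (take r xs)"
    then obtain i where i: "i < length (take r xs)" "v = take r xs ! i" by (auto simp: in_set_conv_nth)
    hence "i \<le> r - 1" "i < length xs" by auto
    thus "v \<le> xs!(r-1)" using i assms sorted_nth_mono by fastforce
  qed
  have "length (filter (\<lambda>v. v \<le> xs!(r-1)) (take r xs)) = r"
    using all assms by (simp add: min_def)
  moreover have "xs = take r xs @ drop r xs" by simp
  hence "length (filter (\<lambda>v. v \<le> xs!(r-1)) xs) = length (filter (\<lambda>v. v \<le> xs!(r-1)) (take r xs)) + length (filter (\<lambda>v. v \<le> xs!(r-1)) (drop r xs))"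
    by (metis filter_append length_append)
  ultimately show ?thesis by linarith
qed

lemma os_lt:
  fixes xs :: "real list"
  assumes "sorted xs" "1 \<le> r" "r \<le> length xs"
  shows "length (filter (\<lambda>v. v < xs!(r-1)) xs) \<le> r - 1"
proof -
  have all: "\<forall>v\<in>set (drop (r-1) xs). \<not> v < xs!(r-1)"
  proof
    fix v assume "v \<in> set (drop (r-1) xs)"
    then obtain i where i: "i < length (drop (r-1) xs)" "v = drop (r-1) xs ! i" by (auto simp: in_set_conv_nth)
    hence "v = xs ! (r - 1 + i)" "r - 1 + i < length xs" using assms by auto
    moreover have "r - 1 \<le> r - 1 + i" by simp
    ultimately show "\<not> v < xs!(r-1)" using assms sorted_nth_mono[of xs "r-1" "r-1+i"] by (simp add: not_less)
  qed
  have "filter (\<lambda>v. v < xs!(r-1)) (drop (r-1) xs) = []"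
    using all by (simp add: filter_empty_conv)
  moreover have "xs = take (r-1) xs @ drop (r-1) xs" by simp
  hence "length (filter (\<lambda>v. v < xs!(r-1)) xs) = length (filter (\<lambda>v. v < xs!(r-1)) (take (r-1) xs)) + length (filter (\<lambda>v. v < xs!(r-1)) (drop (r-1) xs))"
    by (metis filter_append length_append)
  moreover have "length (filter (\<lambda>v. v < xs!(r-1)) (take (r-1) xs)) \<le> r - 1"
    by (metis length_filter_le length_take min.bounded_iff order_refl le_trans)
  ultimately show ?thesis by simp
qed

lemma count_filter:
  fixes f :: "'e \<Rightarrow> real"
  assumes "finite S"
  shows "length (filter P (sorted_list_of_multiset (image_mset f (mset_set S)))) = card {x\<in>S. P (f x)}"
proof -
  have "length (filter P (sorted_list_of_multiset (image_mset f (mset_set S))))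
      = size (filter_mset P (image_mset f (mset_set S)))"
    by (metis mset_filter mset_sorted_list_of_multiset size_mset)
  also have "\<dots> = size (mset_set {x\<in>S. P (f x)})"
    by (simp add: filter_mset_image_mset filter_mset_mset_set assms)
  also have "\<dots> = card {x\<in>S. P (f x)}" by simp
  finally show ?thesis .
qed

lemma len_sl:
  "length (sorted_list_of_multiset (image_mset (f::'e\<Rightarrow>real) (mset_set S))) = card S"
  by (metis mset_sorted_list_of_multiset size_image_mset size_mset size_mset_set)


theorem mainTheorem6:
  fixes A B :: "'v set" and E J :: "'e set" and ea eb :: "'e \<Rightarrow> 'v"
    and c :: "'e \<Rightarrow> 'v \<Rightarrow> real" and r :: "'v \<Rightarrow> nat" and Fsel :: "'v \<Rightarrow> 'e set"
  assumes finA: "finite A" and finB: "finite B" and disj: "A \<inter> B = {}"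
    and finE: "finite E"
    and endA: "\<forall>e\<in>E. ea e \<in> A" and endB: "\<forall>e\<in>E. eb e \<in> B"
    and cost_nonneg: "\<forall>e\<in>E. c e (ea e) \<ge> 0 \<and> c e (eb e) \<ge> 0"
    and feasible: "\<exists>K. K \<subseteq> E \<and> is_cover ea eb B r K"
    and JE: "J \<subseteq> E"
    and Fsel_sub: "\<forall>b\<in>B. Fsel b \<subseteq> delta ea eb (E - J) b"
    and Fsel_card: "\<forall>b\<in>B. card (Fsel b) = resid ea eb r J b"
    and Fsel_min: "\<forall>b\<in>B. \<forall>e\<in>Fsel b. \<forall>e'\<in>delta ea eb (E - J) b - Fsel b. c e b \<le> c e' b"
  shows "is_cover ea eb B r (J \<union> (\<Union>b\<in>B. Fsel b))
    \<and> load_set ea eb c (\<Union>b\<in>B. Fsel b) B \<le> opt ea eb c A B E r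
    \<and> ((\<forall>e\<in>E. min (c e (ea e)) (c e (eb e)) > 0) \<longrightarrow>
         load_set ea eb c (\<Union>b\<in>B. Fsel b) A \<le> slope ea eb c E * potential ea eb c E B r J)"
proof -
  define F where "F = (\<Union>b\<in>B. Fsel b)"
  have dB: "\<And>K b. K \<subseteq> E \<Longrightarrow> b \<in> B \<Longrightarrow> delta ea eb K b = {e\<in>K. eb e = b}"
    using endA disj unfolding delta_def by blast
  have dA: "\<And>K a. K \<subseteq> E \<Longrightarrow> a \<in> A \<Longrightarrow> delta ea eb K a = {e\<in>K. ea e = a}"
    using endB disj unfolding delta_def by blast
  have FselE: "\<And>b. b\<in>B \<Longrightarrow> Fsel b \<subseteq> E - J" using Fsel_sub unfolding delta_def by blast
  have Fseleb: "\<And>b e. b\<in>B \<Longrightarrow> e \<in> Fsel b \<Longrightarrow> eb e = b"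
  proof -
    fix b e assume "b\<in>B" "e \<in> Fsel b"
    thus "eb e = b" using Fsel_sub dB[of "E-J" b] by blast
  qed
  have FE: "F \<subseteq> E" using FselE unfolding F_def by blast
  have finF: "finite F" using FE finE finite_subset by blast
  have finFsel: "\<And>b. b\<in>B \<Longrightarrow> finite (Fsel b)" using FselE finE finite_subset by blast
  have FebF: "\<And>b. b\<in>B \<Longrightarrow> {e\<in>F. eb e = b} = Fsel b"
    unfolding F_def using Fseleb by blast
  have dFB: "\<And>b. b\<in>B \<Longrightarrow> delta ea eb F b = Fsel b"
    using dB[OF FE] FebF by simp
  have finD: "\<And>K v. K \<subseteq> E \<Longrightarrow> finite (delta ea eb K v)"
    unfolding delta_def using finE finite_subset by (metis (no_types, lifting) mem_Collect_eq subsetI subset_eq)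
  have degE: "\<And>b. b\<in>B \<Longrightarrow> r b \<le> card (delta ea eb E b)"
  proof -
    fix b assume b: "b\<in>B"
    obtain K where K: "K \<subseteq> E" "is_cover ea eb B r K" using feasible by blast
    have "r b \<le> card (delta ea eb K b)" using K b unfolding is_cover_def deg_def by blast
    also have "\<dots> \<le> card (delta ea eb E b)"
      by (rule card_mono[OF finD[OF order_refl]]) (use K in \<open>auto simp: delta_def\<close>)
    finally show "r b \<le> card (delta ea eb E b)" .
  qed
  define w where "w = wreq ea eb c E r"
  define xs where "xs b = sorted_list_of_multiset (image_mset (\<lambda>e. c e b) (mset_set (delta ea eb E b)))" for b
  have w_eq: "\<And>b. r b \<noteq> 0 \<Longrightarrow> w b = xs b ! (r b - 1)"
    unfolding w_def wreq_def xs_def by simp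
  have w0: "\<And>b. r b = 0 \<Longrightarrow> w b = 0" unfolding w_def wreq_def by simp
  have lenxs: "\<And>b. length (xs b) = card (delta ea eb E b)" unfolding xs_def by (rule len_sl)
  have sxs: "\<And>b. sorted (xs b)" unfolding xs_def by simp
  have cnt_le: "\<And>b. b\<in>B \<Longrightarrow> 1 \<le> r b \<Longrightarrow> r b \<le> card {x\<in>delta ea eb E b. c x b \<le> w b}"
  proof -
    fix b assume b: "b\<in>B" "1 \<le> r b"
    have "r b \<le> length (filter (\<lambda>v. v \<le> xs b!(r b-1)) (xs b))"
      using os_le[OF sxs b(2)] degE[OF b(1)] lenxs by simp
    also have "\<dots> = card {x\<in>delta ea eb E b. c x b \<le> w b}"
      unfolding xs_def using count_filter[OF finD[OF order_refl]] w_eq b(2) xs_def by simp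
    finally show "r b \<le> card {x\<in>delta ea eb E b. c x b \<le> w b}" .
  qed
  have cnt_lt: "\<And>b. b\<in>B \<Longrightarrow> 1 \<le> r b \<Longrightarrow> card {x\<in>delta ea eb E b. c x b < w b} \<le> r b - 1"
  proof -
    fix b assume b: "b\<in>B" "1 \<le> r b"
    have "card {x\<in>delta ea eb E b. c x b < w b} = length (filter (\<lambda>v. v < xs b!(r b-1)) (xs b))"
      unfolding xs_def using count_filter[OF finD[OF order_refl]] w_eq b(2) xs_def by simp
    also have "\<dots> \<le> r b - 1"
      using os_lt[OF sxs b(2)] degE[OF b(1)] lenxs by simp
    finally show "card {x\<in>delta ea eb E b. c x b < w b} \<le> r b - 1" .
  qed
  have key: "\<And>b e. b\<in>B \<Longrightarrow> e\<in>Fsel b \<Longrightarrow> c e b \<le> w b"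
  proof (rule ccontr)
    fix b e assume b: "b\<in>B" and e: "e \<in> Fsel b" and gt: "\<not> c e b \<le> w b"
    have cF: "card (Fsel b) = r b - deg ea eb J b" using Fsel_card b unfolding resid_def by simp
    have "card (Fsel b) \<ge> 1" using e finFsel[OF b] by (metis One_nat_def Suc_leI card_gt_0_iff empty_iff)
    hence rpos: "1 \<le> r b" and rd: "r b - deg ea eb J b \<ge> 1" using cF by auto
    let ?X = "{x\<in>delta ea eb E b. c x b \<le> w b}"
    have sub: "?X \<subseteq> delta ea eb J b \<union> (Fsel b - {e})"
    proof
      fix x assume x: "x \<in> ?X"
      show "x \<in> delta ea eb J b \<union> (Fsel b - {e})"
      proof (cases "x \<in> J")
        case True thus ?thesis using x unfolding delta_def by auto
      next
        case False
        hence xd: "x \<in> delta ea eb (E - J) b" using x unfolding delta_def by auto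
        have "x \<in> Fsel b"
        proof (rule ccontr)
          assume "x \<notin> Fsel b"
          hence "c e b \<le> c x b" using Fsel_min b e xd by blast
          thus False using x gt by auto
        qed
        moreover have "x \<noteq> e" using x gt by auto
        ultimately show ?thesis by blast
      qed
    qed
    have "card ?X \<le> card (delta ea eb J b \<union> (Fsel b - {e}))"
      by (rule card_mono[OF _ sub]) (use finD[OF JE] finFsel[OF b] in auto)
    also have "\<dots> \<le> card (delta ea eb J b) + card (Fsel b - {e})" by (rule card_Un_le)
    also have "card (Fsel b - {e}) = card (Fsel b) - 1" using e finFsel[OF b] by simp
    finally have "card ?X \<le> deg ea eb J b + (card (Fsel b) - 1)"
      unfolding deg_def by simp
    hence "card ?X \<le> r b - 1" using rd cF by simp
    thus False using cnt_le[OF b rpos] rpos by simp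
  qed
  have lnn: "\<And>K v. K \<subseteq> E \<Longrightarrow> 0 \<le> load ea eb c K v"
  proof -
    fix K v assume K: "K \<subseteq> E"
    show "0 \<le> load ea eb c K v"
    proof (cases "delta ea eb K v = {}")
      case True thus ?thesis unfolding load_def by simp
    next
      case False
      then obtain e where e: "e \<in> delta ea eb K v" by blast
      hence "0 \<le> c e v" using K cost_nonneg unfolding delta_def by auto
      also have "c e v \<le> Max ((\<lambda>e. c e v) ` delta ea eb K v)"
        using e finD[OF K] by simp
      finally show ?thesis using False unfolding load_def by simp
    qed
  qed
  have wle: "\<And>K b. K \<subseteq> E \<Longrightarrow> is_cover ea eb B r K \<Longrightarrow> b\<in>B \<Longrightarrow> w b \<le> load ea eb c K b"
  proof -
    fix K b assume K: "K \<subseteq> E" "is_cover ea eb B r K" and b: "b\<in>B"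
    show "w b \<le> load ea eb c K b"
    proof (cases "r b = 0")
      case True thus ?thesis using w0 lnn[OF K(1)] by simp
    next
      case False
      hence rpos: "1 \<le> r b" by simp
      show ?thesis
      proof (rule ccontr)
        assume "\<not> w b \<le> load ea eb c K b"
        hence lt: "load ea eb c K b < w b" by simp
        have rK: "r b \<le> card (delta ea eb K b)" using K b unfolding is_cover_def deg_def by blast
        hence ne: "delta ea eb K b \<noteq> {}" using rpos by auto
        have "delta ea eb K b \<subseteq> {x\<in>delta ea eb E b. c x b < w b}"
        proof
          fix x assume x: "x \<in> delta ea eb K b"
          have "c x b \<le> Max ((\<lambda>e. c e b) ` delta ea eb K b)" using x finD[OF K(1)] by simp
          hence "c x b < w b" using lt ne unfolding load_def by simp
          thus "x \<in> {x\<in>delta ea eb E b. c x b < w b}" using x K unfolding delta_def by auto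
        qed
        hence "card (delta ea eb K b) \<le> card {x\<in>delta ea eb E b. c x b < w b}"
          by (rule card_mono[rotated]) (use finD[OF order_refl] in auto)
        thus False using rK cnt_lt[OF b rpos] rpos by simp
      qed
    qed
  qed
  have loadFB: "\<And>K b. K \<subseteq> E \<Longrightarrow> is_cover ea eb B r K \<Longrightarrow> b\<in>B \<Longrightarrow> load ea eb c F b \<le> load ea eb c K b"
  proof -
    fix K b assume K: "K \<subseteq> E" "is_cover ea eb B r K" and b: "b\<in>B"
    show "load ea eb c F b \<le> load ea eb c K b"
    proof (cases "Fsel b = {}")
      case True thus ?thesis using dFB[OF b] lnn[OF K(1)] unfolding load_def by simp
    next
      case False
      have "Max ((\<lambda>e. c e b) ` Fsel b) \<le> w b"
        using False finFsel[OF b] key[OF b] by (simp add: Max_le_iff)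
      thus ?thesis using False dFB[OF b] wle[OF K b] unfolding load_def by simp
    qed
  qed
  have cover: "is_cover ea eb B r (J \<union> F)"
    unfolding is_cover_def
  proof
    fix b assume b: "b\<in>B"
    have JF: "J \<union> F \<subseteq> E" using JE FE by blast
    have sub: "delta ea eb J b \<union> Fsel b \<subseteq> delta ea eb (J \<union> F) b"
      using dFB[OF b] unfolding delta_def by auto
    have disj2: "delta ea eb J b \<inter> Fsel b = {}" using FselE[OF b] unfolding delta_def by auto
    have "card (delta ea eb J b \<union> Fsel b) = card (delta ea eb J b) + card (Fsel b)"
      by (rule card_Un_disjoint) (use finD[OF JE] finFsel[OF b] disj2 in auto)
    also have "\<dots> \<ge> r b" using Fsel_card b unfolding resid_def deg_def by simp
    finally show "r b \<le> deg ea eb (J \<union> F) b"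
      unfolding deg_def using card_mono[OF finD[OF JF] sub] by linarith
  qed
  define L where "L = {load_set ea eb c K (A \<union> B) | K. K \<subseteq> E \<and> is_cover ea eb B r K}"
  have L_img: "L = (\<lambda>K. load_set ea eb c K (A \<union> B)) ` {K. K \<subseteq> E \<and> is_cover ea eb B r K}"
    unfolding L_def by auto
  have finL: "finite L" unfolding L_img
    by (rule finite_imageI) (rule finite_subset[of _ "Pow E"], auto simp: finE)
  have neL: "L \<noteq> {}" unfolding L_img using feasible by auto
  obtain K where K: "K \<subseteq> E" "is_cover ea eb B r K" and optK: "opt ea eb c A B E r = load_set ea eb c K (A \<union> B)"
    using Min_in[OF finL neL] unfolding opt_def L_def[symmetric] by (auto simp: L_img)
  have part1: "load_set ea eb c F B \<le> opt ea eb c A B E r"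
  proof -
    have "load_set ea eb c F B \<le> (\<Sum>b\<in>B. load ea eb c K b)"
      unfolding load_set_def by (rule sum_mono) (use loadFB[OF K] in auto)
    also have "\<dots> \<le> (\<Sum>v\<in>A. load ea eb c K v) + (\<Sum>b\<in>B. load ea eb c K b)"
      using sum_nonneg[of A "load ea eb c K"] lnn[OF K(1)] by simp
    also have "\<dots> = load_set ea eb c K (A \<union> B)"
      unfolding load_set_def by (rule sum.union_disjoint[symmetric]) (use finA finB disj in auto)
    finally show ?thesis using optK by simp
  qed
  have part2: "(\<forall>e\<in>E. min (c e (ea e)) (c e (eb e)) > 0) \<longrightarrow>
         load_set ea eb c F A \<le> slope ea eb c E * potential ea eb c E B r J"
  proof
    assume pos: "\<forall>e\<in>E. min (c e (ea e)) (c e (eb e)) > 0"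
    show "load_set ea eb c F A \<le> slope ea eb c E * potential ea eb c E B r J"
    proof (cases "E = {}")
      case True
      hence F0: "F = {}" using FE by blast
      have "load_set ea eb c F A = 0" unfolding load_set_def load_def F0 delta_def by simp
      moreover have "potential ea eb c E B r J = 0"
      proof -
        have "\<And>b. b\<in>B \<Longrightarrow> wreq ea eb c E r b = 0"
        proof -
          fix b assume b: "b\<in>B"
          have "r b = 0" using degE[OF b] True unfolding delta_def by simp
          thus "wreq ea eb c E r b = 0" unfolding wreq_def by simp
        qed
        thus ?thesis unfolding potential_def by simp
      qed
      ultimately show ?thesis by simp
    next
      case False
      define \<theta> where "\<theta> = slope ea eb c E"
      define rat where "rat e = max (c e (ea e)) (c e (eb e)) / min (c e (ea e)) (c e (eb e))" for e
      have ratle: "\<And>e. e\<in>E \<Longrightarrow> rat e \<le> \<theta>"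
        unfolding \<theta>_def slope_def rat_def using finE by simp
      have ratnn: "\<And>e. e\<in>E \<Longrightarrow> 0 \<le> rat e" unfolding rat_def using cost_nonneg by auto
      have th0: "0 \<le> \<theta>" using False ratle ratnn by (meson all_not_in_conv order_trans)
      have edge: "\<And>e. e\<in>E \<Longrightarrow> c e (ea e) \<le> \<theta> * c e (eb e)"
      proof -
        fix e assume e: "e\<in>E"
        define M where "M = max (c e (ea e)) (c e (eb e))"
        define m where "m = min (c e (ea e)) (c e (eb e))"
        have m0: "m > 0" using pos e unfolding m_def by auto
        have "c e (ea e) \<le> M" unfolding M_def by simp
        also have "M = rat e * m" unfolding rat_def M_def[symmetric] m_def[symmetric] using m0 by simp
        also have "\<dots> \<le> \<theta> * m" using ratle[OF e] m0 by (simp add: mult_right_mono)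
        also have "\<dots> \<le> \<theta> * c e (eb e)" using th0 unfolding m_def by (simp add: mult_left_mono)
        finally show "c e (ea e) \<le> \<theta> * c e (eb e)" .
      qed
      have loadFA: "\<And>a. a\<in>A \<Longrightarrow> load ea eb c F a \<le> (\<Sum>e\<in>{e\<in>F. ea e = a}. c e (ea e))"
      proof -
        fix a assume a: "a\<in>A"
        have dd: "delta ea eb F a = {e\<in>F. ea e = a}" using dA[OF FE a] .
        have nn: "\<And>e. e \<in> {e\<in>F. ea e = a} \<Longrightarrow> 0 \<le> c e (ea e)" using FE cost_nonneg by auto
        have fin: "finite {e\<in>F. ea e = a}" using finF by simp
        show "load ea eb c F a \<le> (\<Sum>e\<in>{e\<in>F. ea e = a}. c e (ea e))"
        proof (cases "{e\<in>F. ea e = a} = {}")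
          case True show ?thesis unfolding load_def dd True by simp
        next
          case False
          have "Max ((\<lambda>e. c e a) ` {e\<in>F. ea e = a}) \<le> (\<Sum>e\<in>{e\<in>F. ea e = a}. c e (ea e))"
          proof (subst Max_le_iff)
            show "finite ((\<lambda>e. c e a) ` {e\<in>F. ea e = a})" using fin by simp
            show "(\<lambda>e. c e a) ` {e\<in>F. ea e = a} \<noteq> {}" using False by simp
            show "\<forall>x\<in>(\<lambda>e. c e a) ` {e\<in>F. ea e = a}. x \<le> (\<Sum>e\<in>{e\<in>F. ea e = a}. c e (ea e))"
            proof
              fix x assume "x \<in> (\<lambda>e. c e a) ` {e\<in>F. ea e = a}"
              then obtain e where e: "e \<in> {e\<in>F. ea e = a}" "x = c e (ea e)" by auto
              show "x \<le> (\<Sum>e\<in>{e\<in>F. ea e = a}. c e (ea e))"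
                using member_le_sum[of e "{e\<in>F. ea e = a}" "\<lambda>e. c e (ea e)"] e nn fin by simp
            qed
          qed
          thus ?thesis using False unfolding load_def dd by (simp only: if_False)
        qed
      qed
      have "load_set ea eb c F A \<le> (\<Sum>a\<in>A. \<Sum>e\<in>{e\<in>F. ea e = a}. c e (ea e))"
        unfolding load_set_def by (rule sum_mono) (rule loadFA)
      also have "\<dots> = (\<Sum>e\<in>F. c e (ea e))"
        using sum.group[OF finF finA, of ea "\<lambda>e. c e (ea e)"] endA FE by auto
      also have "\<dots> \<le> (\<Sum>e\<in>F. \<theta> * c e (eb e))"
        by (rule sum_mono) (use edge FE in auto)
      also have "\<dots> = \<theta> * (\<Sum>e\<in>F. c e (eb e))" by (simp add: sum_distrib_left)
      also have "(\<Sum>e\<in>F. c e (eb e)) = (\<Sum>b\<in>B. \<Sum>e\<in>{e\<in>F. eb e = b}. c e (eb e))"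
        by (rule sym, rule sum.group[OF finF finB]) (use endB FE in auto)
      also have "\<dots> = (\<Sum>b\<in>B. \<Sum>e\<in>Fsel b. c e b)"
        by (rule sum.cong[OF refl]) (use FebF Fseleb in auto)
      also have "\<dots> \<le> (\<Sum>b\<in>B. wreq ea eb c E r b * real (resid ea eb r J b))"
      proof (rule sum_mono)
        fix b assume b: "b\<in>B"
        have "(\<Sum>e\<in>Fsel b. c e b) \<le> (\<Sum>e\<in>Fsel b. w b)" by (rule sum_mono) (use key b in auto)
        also have "\<dots> = w b * real (card (Fsel b))" by simp
        finally show "(\<Sum>e\<in>Fsel b. c e b) \<le> wreq ea eb c E r b * real (resid ea eb r J b)"
          using Fsel_card b unfolding w_def by simp
      qed
      finally show ?thesis unfolding \<theta>_def potential_def using th0 \<theta>_def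
        by (simp add: mult_left_mono)
    qed
  qed
  show ?thesis using cover part1 part2 unfolding F_def by blast
qed

end
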